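(* In the setting below: (i) If $x\in M_1$, then $\mathcal{P}(x)\cap M\subseteq M_1$, hence $\mathcal{P}(x)\cap M=\mathcal{P}(x)\cap M_1$. In particular $\mathcal{P}(A)\cap M=M_1$. (ii) For every ordinal $\alpha\geq1$, if $x\in M_{\alpha+1}$, then $\mathcal{P}(x)\cap M\subseteq M_{\alpha+1}$, hence $\mathcal{P}(x)\cap M=\mathcal{P}(x)\cap M_{\alpha+1}$. In particular $\mathcal{P}(M_\alpha)\cap M=M_{\alpha+1}$.
   Context: Work in ZFA (ZF with a set $A$ of atoms, i.e. urelements that have no elements), extended by a primitive binary relation $\preccurlyeq$ on $A$, with Separation and Replacement holding for formulas mentioning $\preccurlyeq$. $A$ is an infinite set of atoms and $\preccurlyeq$ is a pre-ordering (reflexive, transitive) on $A$ with no minimal elements: for every $a\in A$ there is $b\in A$ with $b\preccurlyeq a$ and not $a\preccurlyeq b$. For $a\in A$, $pr(a)=\{b\in A:b\preccurlyeq a\}$; $LO(A,\preccurlyeq)$ is the set of nonempty $x\subseteq A$ with $pr(a)\subseteq x$ for all $a\in x$. For a set $X$ of sets, $LO(X,\subseteq)$ is the set of nonempty $x\subseteq X$ such that for every $y\in x$ and every $z\in X$ with $z\subseteq y$, $z\in x$. The magmatic hierarchy: $M_1=LO(A,\preccurlyeq)$; $M_{\alpha+1}=LO(M_\alpha,\subseteq)$ for $\alpha\geq1$; $M_\alpha=\bigcup_{1\leq\beta<\alpha}M_\beta$ for limit $\alpha$; $M=\bigcup_{\alpha\geq1}M_\alpha$. *)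

theory Defs
  imports Main
begin

text \<open>An abstract ZFA-style universe: objects of type 'u, the membership of an object
  is given by elts :: 'u => 'u set; A is the set of atoms (objects without elements);
  all other objects are sets, and they are extensional.\<close>

definition zfa_universe :: "('u \<Rightarrow> 'u set) \<Rightarrow> 'u set \<Rightarrow> bool" where
  "zfa_universe elts A \<longleftrightarrow>
     (\<forall>a\<in>A. elts a = {}) \<and>
     (\<forall>x y. x \<notin> A \<longrightarrow> y \<notin> A \<longrightarrow> elts x = elts y \<longrightarrow> x = y)"

definition pr :: "('u \<Rightarrow> 'u \<Rightarrow> bool) \<Rightarrow> 'u set \<Rightarrow> 'u \<Rightarrow> 'u set" where
  "pr le A a = {b \<in> A. le b a}"

definition LO_pre :: "('u \<Rightarrow> 'u \<Rightarrow> bool) \<Rightarrow> 'u set \<Rightarrow> 'u set set" where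
  "LO_pre le A = {x. x \<noteq> {} \<and> x \<subseteq> A \<and> (\<forall>a\<in>x. pr le A a \<subseteq> x)}"

definition LO_sub :: "('u \<Rightarrow> 'u set) \<Rightarrow> 'u set \<Rightarrow> 'u set set" where
  "LO_sub elts X = {x. x \<noteq> {} \<and> x \<subseteq> X \<and>
      (\<forall>y\<in>x. \<forall>z\<in>X. elts z \<subseteq> elts y \<longrightarrow> z \<in> x)}"

definition obj_of :: "('u \<Rightarrow> 'u set) \<Rightarrow> 'u set \<Rightarrow> 'u set set \<Rightarrow> 'u set" where
  "obj_of elts A S = {x. x \<notin> A \<and> elts x \<in> S}"

definition Pw :: "('u \<Rightarrow> 'u set) \<Rightarrow> 'u set \<Rightarrow> 'u set \<Rightarrow> 'u set" where
  "Pw elts A S = {y. y \<notin> A \<and> elts y \<subseteq> S}"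

definition is_succ :: "'i::wellorder \<Rightarrow> 'i \<Rightarrow> bool" where
  "is_succ i j \<longleftrightarrow> i < j \<and> (\<forall>k. i < k \<longrightarrow> j \<le> k)"

text \<open>The magmatic hierarchy indexed by a well-ordered type 'i: the least index plays
  the role of the ordinal 1, successor indices of successor ordinals, and the remaining
  indices of limit ordinals.\<close>
definition magmatic_hierarchy ::
  "('u \<Rightarrow> 'u set) \<Rightarrow> 'u set \<Rightarrow> ('u \<Rightarrow> 'u \<Rightarrow> bool) \<Rightarrow> ('i::wellorder \<Rightarrow> 'u set) \<Rightarrow> bool" where
  "magmatic_hierarchy elts A le M \<longleftrightarrow>
     (\<forall>i. (\<forall>k. i \<le> k) \<longrightarrow> M i = obj_of elts A (LO_pre le A)) \<and>
     (\<forall>i j. is_succ i j \<longrightarrow> M j = obj_of elts A (LO_sub elts (M i))) \<and>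
     (\<forall>j. \<not> (\<forall>k. j \<le> k) \<longrightarrow> \<not> (\<exists>i. is_succ i j) \<longrightarrow> M j = (\<Union>k\<in>{k. k < j}. M k))"

end

theory Submission
  imports Defs
begin

lemma mh1: "magmatic_hierarchy elts A le M \<Longrightarrow> (\<forall>k. i \<le> k) \<Longrightarrow> M i = obj_of elts A (LO_pre le A)"
  unfolding magmatic_hierarchy_def by blast
lemma mh2: "magmatic_hierarchy elts A le M \<Longrightarrow> is_succ i j \<Longrightarrow> M j = obj_of elts A (LO_sub elts (M i))"
  unfolding magmatic_hierarchy_def by blast
lemma mh3: "magmatic_hierarchy elts A le M \<Longrightarrow> \<not> (\<forall>k. j \<le> k) \<Longrightarrow> \<not> (\<exists>i. is_succ i j) \<Longrightarrow> M j = (\<Union>k\<in>{k. k < j}. M k)"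
  unfolding magmatic_hierarchy_def by blast

lemma G0:
  fixes M :: "'i::wellorder \<Rightarrow> 'u set"
  assumes hier: "magmatic_hierarchy elts A le M"
  shows "w \<in> M k \<Longrightarrow> w \<notin> A \<and> elts w \<noteq> {}"
proof (induction k rule: less_induct)
  case (less k)
  show ?case
  proof (cases "\<forall>m. k \<le> m")
    case True
    then show ?thesis using mh1[OF hier True] less.prems
      by (auto simp: obj_of_def LO_pre_def)
  next
    case F: False
    show ?thesis
    proof (cases "\<exists>i. is_succ i k")
      case True
      then obtain i where "is_succ i k" by blast
      then show ?thesis using mh2[OF hier] less.prems
        by (auto simp: obj_of_def LO_sub_def)
    next
      case False
      then show ?thesis using mh3[OF hier F False] less.prems less.IH by auto
    qed
  qed
qed

lemma G2:
  fixes M :: "'i::wellorder \<Rightarrow> 'u set"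
  assumes hier: "magmatic_hierarchy elts A le M"
  shows "w \<in> M k \<Longrightarrow> w \<in> obj_of elts A (LO_pre le A) \<or> (\<exists>p q. is_succ p q \<and> w \<in> M q)"
proof (induction k rule: less_induct)
  case (less k)
  show ?case
  proof (cases "\<forall>m. k \<le> m")
    case True
    then show ?thesis using mh1[OF hier True] less.prems by auto
  next
    case F: False
    show ?thesis
    proof (cases "\<exists>i. is_succ i k")
      case True
      then show ?thesis using less.prems by blast
    next
      case False
      then show ?thesis using mh3[OF hier F False] less.prems less.IH by auto
    qed
  qed
qed

lemma G1:
  fixes M :: "'i::wellorder \<Rightarrow> 'u set"
  assumes hier: "magmatic_hierarchy elts A le M"
    and w: "w \<in> M k" and sub: "elts w \<subseteq> A"
  shows "w \<in> obj_of elts A (LO_pre le A)"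
proof -
  { fix p q assume pq: "is_succ p q" "w \<in> M q"
    then have "elts w \<subseteq> M p" "elts w \<noteq> {}"
      using mh2[OF hier pq(1)] by (auto simp: obj_of_def LO_sub_def)
    then obtain u where "u \<in> M p" "u \<in> A" using sub by blast
    then have False using G0[OF hier] by blast }
  then show ?thesis using G2[OF hier w] by blast
qed

lemma D:
  fixes M :: "'i::wellorder \<Rightarrow> 'u set"
  assumes hier: "magmatic_hierarchy elts A le M"
    and ij: "is_succ i j" and y: "y \<in> M m" and sub: "elts y \<subseteq> M i"
    and P: "\<forall>u\<in>elts y. \<forall>k. u \<in> M k \<longrightarrow> (\<forall>v\<in>\<Union>(range M). elts v \<subseteq> elts u \<longrightarrow> v \<in> M k)"
  shows "y \<in> M j"
proof -
  have ne: "y \<notin> A" "elts y \<noteq> {}" using G0[OF hier y] by auto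
  have "\<not> y \<in> obj_of elts A (LO_pre le A)"
  proof
    assume "y \<in> obj_of elts A (LO_pre le A)"
    then have "elts y \<subseteq> A" by (auto simp: obj_of_def LO_pre_def)
    then obtain u where "u \<in> M i" "u \<in> A" using sub ne by blast
    then show False using G0[OF hier] by blast
  qed
  then obtain p q where pq: "is_succ p q" "y \<in> M q" using G2[OF hier y] by blast
  then have dl: "elts y \<in> LO_sub elts (M p)" using mh2[OF hier pq(1)] by (auto simp: obj_of_def)
  have "\<forall>u\<in>elts y. \<forall>v\<in>M i. elts v \<subseteq> elts u \<longrightarrow> v \<in> elts y"
  proof (intro ballI impI)
    fix u v assume u: "u \<in> elts y" and v: "v \<in> M i" and vu: "elts v \<subseteq> elts u"
    have "u \<in> M p" using dl u by (auto simp: LO_sub_def)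
    then have "v \<in> M p" using P u v vu by blast
    then show "v \<in> elts y" using dl u vu by (auto simp: LO_sub_def)
  qed
  then show ?thesis using mh2[OF hier ij] ne sub by (auto simp: obj_of_def LO_sub_def)
qed

lemma S:
  fixes M :: "'i::wellorder \<Rightarrow> 'u set"
  assumes hier: "magmatic_hierarchy elts A le M"
  shows "z \<in> M n \<Longrightarrow> z \<in> M k \<Longrightarrow> w \<in> \<Union>(range M) \<Longrightarrow> elts w \<subseteq> elts z \<Longrightarrow> w \<in> M k"
proof (induction n arbitrary: z k w rule: less_induct)
  case (less n)
  show ?case
  proof (cases "(\<forall>m. n \<le> m) \<or> (\<exists>i. is_succ i n)")
    case False
    then have "M n = (\<Union>k\<in>{k. k < n}. M k)" using mh3[OF hier] by blast
    then show ?thesis using less by blast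
  next
    case nc: True
    show ?thesis using less.prems(2)
    proof (induction k rule: less_induct)
      case (less k)
      show ?case
      proof (cases "\<forall>m. k \<le> m")
        case True
        then have "elts z \<subseteq> A" using mh1[OF hier True] less.prems
          by (auto simp: obj_of_def LO_pre_def)
        then show ?thesis using mh1[OF hier True] G1[OF hier] \<open>w \<in> \<Union>(range M)\<close>
            \<open>elts w \<subseteq> elts z\<close> by blast
      next
        case F: False
        show ?thesis
        proof (cases "\<exists>i. is_succ i k")
          case False
          then show ?thesis using mh3[OF hier F False] less.prems less.IH by auto
        next
          case True
          then obtain i where ik: "is_succ i k" by blast
          have zi: "elts z \<subseteq> M i" using mh2[OF hier ik] less.prems
            by (auto simp: obj_of_def LO_sub_def)
          obtain m where wm: "w \<in> M m" using \<open>w \<in> \<Union>(range M)\<close> by blast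
          show ?thesis
          proof (rule D[OF hier ik wm])
            show "elts w \<subseteq> M i" using zi \<open>elts w \<subseteq> elts z\<close> by blast
            show "\<forall>u\<in>elts w. \<forall>k. u \<in> M k \<longrightarrow> (\<forall>v\<in>\<Union>(range M). elts v \<subseteq> elts u \<longrightarrow> v \<in> M k)"
            proof (cases "\<forall>m. n \<le> m")
              case True
              then have "elts z \<subseteq> A" using mh1[OF hier True] \<open>z \<in> M n\<close>
                by (auto simp: obj_of_def LO_pre_def)
              then have "\<forall>u\<in>elts w. False" using zi \<open>elts w \<subseteq> elts z\<close> G0[OF hier] by blast
              then show ?thesis by blast
            next
              case False
              then obtain p where pn: "is_succ p n" using nc by blast
              then have "elts z \<subseteq> M p" "p < n" using mh2[OF hier pn] \<open>z \<in> M n\<close>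
                by (auto simp: obj_of_def LO_sub_def is_succ_def)
              then show ?thesis using \<open>elts w \<subseteq> elts z\<close> \<open>\<And>y z k w. y < n \<Longrightarrow> z \<in> M y \<Longrightarrow> z \<in> M k \<Longrightarrow> w \<in> \<Union>(range M) \<Longrightarrow> elts w \<subseteq> elts z \<Longrightarrow> w \<in> M k\<close>
                by blast
            qed
          qed
        qed
      qed
    qed
  qed
qed

theorem proposition4p5:
  fixes elts :: "'u \<Rightarrow> 'u set" and A :: "'u set" and le :: "'u \<Rightarrow> 'u \<Rightarrow> bool"
    and M :: "'i::wellorder \<Rightarrow> 'u set"
  assumes univ: "zfa_universe elts A"
    and infA: "infinite A"
    and refl: "\<forall>a\<in>A. le a a"
    and trans: "\<forall>a\<in>A. \<forall>b\<in>A. \<forall>c\<in>A. le a b \<longrightarrow> le b c \<longrightarrow> le a c"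
    and nomin: "\<forall>a\<in>A. \<exists>b\<in>A. le b a \<and> \<not> le a b"
    and hier: "magmatic_hierarchy elts A le M"
  shows
    "(\<forall>i0. (\<forall>k. i0 \<le> k) \<longrightarrow>
        (\<forall>x\<in>M i0. Pw elts A (elts x) \<inter> (\<Union>(range M)) \<subseteq> M i0 \<and>
                   Pw elts A (elts x) \<inter> (\<Union>(range M)) = Pw elts A (elts x) \<inter> M i0) \<and>
        Pw elts A A \<inter> (\<Union>(range M)) = M i0) \<and>
     (\<forall>i j. is_succ i j \<longrightarrow>
        (\<forall>x\<in>M j. Pw elts A (elts x) \<inter> (\<Union>(range M)) \<subseteq> M j \<and>
                  Pw elts A (elts x) \<inter> (\<Union>(range M)) = Pw elts A (elts x) \<inter> M j) \<and>
        Pw elts A (M i) \<inter> (\<Union>(range M)) = M j)"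
proof (intro conjI allI impI ballI)
  fix i0 :: 'i assume i0: "\<forall>k. i0 \<le> k"
  note e = mh1[OF hier i0]
  have A1: "Pw elts A A \<inter> (\<Union>(range M)) \<subseteq> M i0"
    using G1[OF hier] e by (auto simp: Pw_def)
  show "Pw elts A A \<inter> (\<Union>(range M)) = M i0"
  proof
    show "M i0 \<subseteq> Pw elts A A \<inter> (\<Union>(range M))"
    proof
      fix y assume "y \<in> M i0"
      then show "y \<in> Pw elts A A \<inter> (\<Union>(range M))"
        using e by (auto simp: Pw_def obj_of_def LO_pre_def)
    qed
  qed (rule A1)
  fix x assume x: "x \<in> M i0"
  then have "elts x \<subseteq> A" using e by (auto simp: obj_of_def LO_pre_def)
  then have "Pw elts A (elts x) \<subseteq> Pw elts A A" by (auto simp: Pw_def)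
  then show "Pw elts A (elts x) \<inter> (\<Union>(range M)) \<subseteq> M i0" using A1 by blast
  then show "Pw elts A (elts x) \<inter> (\<Union>(range M)) = Pw elts A (elts x) \<inter> M i0" by blast
next
  fix i j :: 'i assume ij: "is_succ i j"
  {
    fix x assume x: "x \<in> M j"
    show C: "Pw elts A (elts x) \<inter> (\<Union>(range M)) \<subseteq> M j"
      using S[OF hier x x] by (auto simp: Pw_def)
    then show "Pw elts A (elts x) \<inter> (\<Union>(range M)) = Pw elts A (elts x) \<inter> M j" by blast
  }
  show "Pw elts A (M i) \<inter> (\<Union>(range M)) = M j"
  proof
    show "M j \<subseteq> Pw elts A (M i) \<inter> (\<Union>(range M))"
    proof
      fix y assume "y \<in> M j"
      then show "y \<in> Pw elts A (M i) \<inter> (\<Union>(range M))"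
        using mh2[OF hier ij] by (auto simp: Pw_def obj_of_def LO_sub_def)
    qed
    show "Pw elts A (M i) \<inter> (\<Union>(range M)) \<subseteq> M j"
    proof
      fix y assume y: "y \<in> Pw elts A (M i) \<inter> (\<Union>(range M))"
      then obtain m where ym: "y \<in> M m" by blast
      show "y \<in> M j"
      proof (rule D[OF hier ij ym])
        show "elts y \<subseteq> M i" using y by (auto simp: Pw_def)
        then show "\<forall>u\<in>elts y. \<forall>k. u \<in> M k \<longrightarrow> (\<forall>v\<in>\<Union>(range M). elts v \<subseteq> elts u \<longrightarrow> v \<in> M k)"
          using S[OF hier] by blast
      qed
    qed
  qed
qed

end
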